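(* Let $W\subset D_2(H)$ be the subgroup generated by all elements $T(a_i,b_j;b_k,b_l)$, $1\le i,j,k,l\le g$, and let $N:=\operatorname{Ker}(\operatorname{Tr}^A|_W:W\to S^2(H'))$. For indices set $①_{i,j,k,l}:=T(a_i,b_j;b_k,b_l)$, $②_{i,j,k}:=T(a_i,b_j;b_k,b_i)$, $③_{i,k,l}:=T(a_i,b_i;b_k,b_l)$, $④_{i,k}:=T(a_i,b_i;b_k,b_i)$, always with $i$ different from $j,k,l$. Then $N$ is generated by all elements $①_{i,j,k,l}$, all elements $③_{i,k,l}$, and the elements $$②_{i,j,j}-②_{i',j,j},\quad ②_{i,j,k}-②_{i',j,k},\quad ②_{i,j,k}-②_{i',k,j},\quad ②_{i,j,k}-④_{j,k},\quad ②_{i,j,k}-④_{k,j},\quad ④_{i,k}-④_{k,i},$$ where $i,i'\notin\{j,k\}$ and $j\ne k$ (and $i\ne k$ in $④_{i,k}$).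
   Context: Let $g\ge 2$, $\Sigma_{g,1}$ a compact connected oriented surface of genus $g$ with one boundary component, $H=H_1(\Sigma_{g,1};\mathbb Z)$ with intersection form $\omega$, $\mathcal L(H)$ the free Lie ring on $H$ embedded in $T(H)$ via $[x,y]=x\otimes y-y\otimes x$, and $D_2(H):=\ker(H\otimes\mathcal L_3(H)\to\mathcal L_4(H),\ h\otimes u\mapsto[h,u])$. For $a,b,c,d\in H$, $T(a,b;c,d):=a\otimes[b,[c,d]]+b\otimes[[c,d],a]+c\otimes[d,[a,b]]+d\otimes[[a,b],c]\in D_2(H)$. Let $V_g$ be a handlebody with $\Sigma_{g,1}\subset\partial V_g$; $A:=\ker(H\to H_1(V_g;\mathbb Z))$, $H':=H/A$, $x'$ the class of $x\in H$; fix a symplectic basis $(a_1,\dots,a_g,b_1,\dots,b_g)$ of $H$ ($\omega(a_i,b_j)=\delta_{ij}$, $\omega(a_i,a_j)=\omega(b_i,b_j)=0$) with $a_i\in A$. $\omega':A\times H'\to\mathbb Z$, $\omega'(a,x')=\omega(a,x)$. With $p:H\otimes\mathcal L_3(H)\to H\otimes\mathcal L_3(H')$ induced by $H\to H'$ and $K_A:=\ker(D_2(H)\to D_2(H'))$ (so $p(K_A)\subset A\otimes\mathcal L_3(H')$; all elements $T(a_i,\cdot;\cdot,\cdot)$ above lie in $K_A$), $\operatorname{Tr}^A:K_A\to S^2(H')$ is the composite of $p$, $A\otimes\mathcal L_3(H')\subset A\otimes H'^{\otimes3}$, the contraction $a\otimes x\otimes y\otimes z\mapsto\omega'(a,x)\,y\otimes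 z$, and projection to $S^2(H')$. *)

theory Defs
  imports Main
begin

text \<open>Coordinates: H = H_1(Sigma_{g,1}) is free abelian on the symplectic basis
  a_1..a_g, b_1..b_g (letters La i, Lb i, 1 <= i <= g).  The tensor algebra T(H) is
  modelled as integer-valued functions on words of letters (coefficient of each
  basis tensor); H' = H/A has basis b_1',...,b_g' (images of the Lb i).\<close>

datatype letter = La nat | Lb nat

type_synonym tensor = "letter list \<Rightarrow> int"

definition tadd :: "tensor \<Rightarrow> tensor \<Rightarrow> tensor" where
  "tadd x y = (\<lambda>w. x w + y w)"

definition tsub :: "tensor \<Rightarrow> tensor \<Rightarrow> tensor" where
  "tsub x y = (\<lambda>w. x w - y w)"

definition tmul :: "tensor \<Rightarrow> tensor \<Rightarrow> tensor" where
  "tmul x y = (\<lambda>w. \<Sum>n\<le>length w. x (take n w) * y (drop n w))"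

definition gen :: "letter \<Rightarrow> tensor" where
  "gen l = (\<lambda>w. if w = [l] then 1 else 0)"

definition lie :: "tensor \<Rightarrow> tensor \<Rightarrow> tensor" where
  "lie x y = tsub (tmul x y) (tmul y x)"

definition T4 :: "letter \<Rightarrow> letter \<Rightarrow> letter \<Rightarrow> letter \<Rightarrow> tensor" where
  "T4 a b c d =
     tadd (tadd (tmul (gen a) (lie (gen b) (lie (gen c) (gen d))))
                (tmul (gen b) (lie (lie (gen c) (gen d)) (gen a))))
          (tadd (tmul (gen c) (lie (gen d) (lie (gen a) (gen b))))
                (tmul (gen d) (lie (lie (gen a) (gen b)) (gen c))))"

inductive_set zspan :: "tensor set \<Rightarrow> tensor set" for S :: "tensor set" where
  zero: "(\<lambda>_. 0) \<in> zspan S"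
| add: "x \<in> S \<Longrightarrow> y \<in> zspan S \<Longrightarrow> tadd y x \<in> zspan S"
| sub: "x \<in> S \<Longrightarrow> y \<in> zspan S \<Longrightarrow> tsub y x \<in> zspan S"

definition W :: "nat \<Rightarrow> tensor set" where
  "W g = zspan {T4 (La i) (Lb j) (Lb k) (Lb l) | i j k l.
                 i \<in> {1..g} \<and> j \<in> {1..g} \<and> k \<in> {1..g} \<and> l \<in> {1..g}}"

fun omega :: "letter \<Rightarrow> letter \<Rightarrow> int" where
  "omega (La i) (Lb j) = (if i = j then 1 else 0)"
| "omega (Lb i) (La j) = (if i = j then -1 else 0)"
| "omega _ _ = 0"

definition letters :: "nat \<Rightarrow> letter set" where
  "letters g = La ` {1..g} \<union> Lb ` {1..g}"

text \<open>Composite of p (positions 2-4 projected to H', i.e. a's killed, b's kept) and the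
  contraction h (x) x' (x) y' (x) z' |-> omega(h,x) y' (x) z': result in H'(x)H',
  as coefficient of b_k'(x)b_l'.\<close>
definition contr :: "nat \<Rightarrow> tensor \<Rightarrow> nat \<Rightarrow> nat \<Rightarrow> int" where
  "contr g x k l = (\<Sum>h\<in>letters g. \<Sum>j\<in>{1..g}. omega h (Lb j) * x [h, Lb j, Lb k, Lb l])"

text \<open>Projection H'(x)H' -> S^2(H') in the monomial basis b_k' b_l' (k,l unordered).\<close>
definition sym2 :: "(nat \<Rightarrow> nat \<Rightarrow> int) \<Rightarrow> nat \<Rightarrow> nat \<Rightarrow> int" where
  "sym2 t k l = (if k = l then t k k else t k l + t l k)"

definition trA :: "nat \<Rightarrow> tensor \<Rightarrow> nat \<Rightarrow> nat \<Rightarrow> int" where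
  "trA g x = (\<lambda>k l. if k \<in> {1..g} \<and> l \<in> {1..g} then sym2 (contr g x) k l else 0)"

end

theory Submission
  imports Defs
begin


lemma tmul_gen_Nil: "tmul (gen a) y [] = 0"
  by (simp add: tmul_def gen_def)

lemma tmul_gen_Cons: "tmul (gen a) y (h#t) = (if h = a then y t else 0)"
proof -
  have "tmul (gen a) y (h#t) = (\<Sum>n\<le>Suc (length t). gen a (take n (h#t)) * y (drop n (h#t)))"
    by (simp add: tmul_def)
  also have "\<dots> = gen a [] * y (h#t) + (\<Sum>n\<le>length t. gen a (take (Suc n) (h#t)) * y (drop (Suc n) (h#t)))"
    by (subst sum.atMost_Suc_shift) simp
  also have "(\<Sum>n\<le>length t. gen a (take (Suc n) (h#t)) * y (drop (Suc n) (h#t)))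
     = (\<Sum>n\<le>length t. if n = 0 then gen a [h] * y t else 0)"
    by (rule sum.cong) (auto simp: gen_def)
  finally show ?thesis by (simp add: gen_def)
qed

lemma tmul_gen_snoc: "tmul x (gen a) (w @ [h]) = (if h = a then x w else 0)"
proof -
  have "tmul x (gen a) (w@[h]) = (\<Sum>n<Suc (Suc (length w)). x (take n (w@[h])) * gen a (drop n (w@[h])))"
    by (simp add: tmul_def atMost_atLeast0 lessThan_Suc_atMost)
  also have "\<dots> = (\<Sum>n<length w. x (take n (w@[h])) * gen a (drop n (w@[h]))) + x w * gen a [h] + x (w@[h]) * gen a []"
    by simp
  also have "(\<Sum>n<length w. x (take n (w@[h])) * gen a (drop n (w@[h]))) = 0"
    by (rule sum.neutral) (auto simp: gen_def)
  finally show ?thesis by (simp add: gen_def)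
qed

lemma tmul_gen_gen: "tmul (gen b) (gen c) w = (if w = [b,c] then 1 else 0)"
proof (cases w)
  case Nil then show ?thesis by (simp add: tmul_gen_Nil)
next
  case (Cons h t) then show ?thesis unfolding Cons tmul_gen_Cons by (auto simp: gen_def)
qed
lemma lie_gen_gen: "lie (gen b) (gen c) w = (if w = [b,c] then 1 else 0) - (if w = [c,b] then 1 else 0)"
  by (simp add: lie_def tsub_def tmul_gen_gen)
lemma lie3: "lie (gen b) (lie (gen c) (gen d)) [x,y,z] =
   (if [x,y,z] = [b,c,d] then 1 else 0) - (if [x,y,z] = [b,d,c] then 1 else 0)
  - (if [x,y,z] = [c,d,b] then 1 else 0) + (if [x,y,z] = [d,c,b] then 1 else 0)"
proof -
  have 1: "tmul (lie (gen c) (gen d)) (gen b) [x,y,z] = (if z = b then lie (gen c) (gen d) [x,y] else 0)"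
    using tmul_gen_snoc[of "lie (gen c) (gen d)" b "[x,y]" z] by simp
  have 2: "tmul (gen b) (lie (gen c) (gen d)) [x,y,z] = (if x = b then lie (gen c) (gen d) [y,z] else 0)"
    by (rule tmul_gen_Cons)
  have "lie (gen b) (lie (gen c) (gen d)) [x,y,z] =
     (if x = b then lie (gen c) (gen d) [y,z] else 0) - (if z = b then lie (gen c) (gen d) [x,y] else 0)"
    unfolding lie_def[of "gen b"] tsub_def 1 2 ..
  then show ?thesis unfolding lie_gen_gen by simp
qed


lemma T4_eval: "T4 (La i) (Lb j) (Lb k) (Lb l) [La q, Lb q, Lb m, Lb n] =
   (if i = q then (if [q,m,n] = [j,k,l] then 1 else 0) - (if [q,m,n] = [j,l,k] then 1 else 0)
  - (if [q,m,n] = [k,l,j] then 1 else 0) + (if [q,m,n] = [l,k,j] then 1 else 0) else 0)"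
  unfolding T4_def tadd_def tmul_gen_Cons lie3 by simp


definition mono :: "nat \<Rightarrow> nat \<Rightarrow> nat \<Rightarrow> nat \<Rightarrow> int" where
  "mono p q m n = (if m = n then (if p = m \<and> q = m then 1 else 0)
                   else (if (p = m \<and> q = n) \<or> (p = n \<and> q = m) then 1 else 0))"

definition chi :: "nat \<Rightarrow> nat \<Rightarrow> nat \<Rightarrow> nat \<Rightarrow> int" where
  "chi p q m n = (if m = p \<and> n = q then 1 else 0)"

lemma mono_sym: "mono p q = mono q p"
  by (auto simp: mono_def fun_eq_iff)

lemma sym2_chi: "sym2 (chi p q) m n = mono p q m n"
  by (auto simp: sym2_def chi_def mono_def)

lemma contr_simp: "contr g x m n = (\<Sum>q\<in>{1..g}. x [La q, Lb q, Lb m, Lb n])"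
proof -
  have d: "La ` {1..g} \<inter> Lb ` {1..g} = {}" by auto
  have "contr g x m n = (\<Sum>h\<in>La ` {1..g}. \<Sum>j\<in>{1..g}. omega h (Lb j) * x [h, Lb j, Lb m, Lb n])
      + (\<Sum>h\<in>Lb ` {1..g}. \<Sum>j\<in>{1..g}. omega h (Lb j) * x [h, Lb j, Lb m, Lb n])"
    unfolding contr_def letters_def by (rule sum.union_disjoint) (use d in auto)
  also have "(\<Sum>h\<in>Lb ` {1..g}. \<Sum>j\<in>{1..g}. omega h (Lb j) * x [h, Lb j, Lb m, Lb n]) = 0"
    by (rule sum.neutral) auto
  also have "(\<Sum>h\<in>La ` {1..g}. \<Sum>j\<in>{1..g}. omega h (Lb j) * x [h, Lb j, Lb m, Lb n])
     = (\<Sum>p\<in>{1..g}. \<Sum>j\<in>{1..g}. (if p = j then 1 else 0) * x [La p, Lb j, Lb m, Lb n])"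
    by (subst sum.reindex) (auto simp: inj_on_def intro!: sum.cong)
  also have "\<dots> = (\<Sum>q\<in>{1..g}. x [La q, Lb q, Lb m, Lb n])"
  proof (rule sum.cong)
    fix p assume "p \<in> {1..g}"
    have e: "\<And>c (y::int). (if c then 1 else 0) * y = (if c then y else 0)" by simp
    show "(\<Sum>j\<in>{1..g}. (if p = j then 1 else 0) * x [La p, Lb j, Lb m, Lb n]) = x [La p, Lb p, Lb m, Lb n]"
      unfolding e using \<open>p \<in> {1..g}\<close> by (simp add: sum.delta)
  qed simp
  finally show ?thesis by simp
qed



lemma contr_T4: assumes "i \<in> {1..g}"
  shows "contr g (T4 (La i) (Lb j) (Lb k) (Lb l)) m n =
   (if i = j then 1 else 0) * (chi k l m n - chi l k m n) - (if i = k then 1 else 0) * chi l j m n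
   + (if i = l then 1 else 0) * chi k j m n"
proof -
  have "contr g (T4 (La i) (Lb j) (Lb k) (Lb l)) m n =
   (if [i,m,n] = [j,k,l] then 1 else 0) - (if [i,m,n] = [j,l,k] then 1 else 0)
  - (if [i,m,n] = [k,l,j] then 1 else 0) + (if [i,m,n] = [l,k,j] then 1 else 0)"
    unfolding contr_simp T4_eval sum.delta' using assms by simp
  also have "\<dots> = (if i = j then 1 else 0) * (chi k l m n - chi l k m n) - (if i = k then 1 else 0) * chi l j m n
   + (if i = l then 1 else 0) * chi k j m n"
    by (cases "i = j"; cases "i = k"; cases "i = l"; simp add: chi_def)
  finally show ?thesis .
qed

lemma trA_T4: assumes "i \<in> {1..g}" shows "trA g (T4 (La i) (Lb j) (Lb k) (Lb l)) =
  (\<lambda>m n. if m \<in> {1..g} \<and> n \<in> {1..g} then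
     - (if i = k then mono l j m n else 0) + (if i = l then mono k j m n else 0) else 0)"
proof (rule ext, rule ext)
  fix m n
  let ?t = "contr g (T4 (La i) (Lb j) (Lb k) (Lb l))"
  have t: "?t = (\<lambda>m n. (if i = j then 1 else 0) * (chi k l m n - chi l k m n) - (if i = k then 1 else 0) * chi l j m n
   + (if i = l then 1 else 0) * chi k j m n)"
    using contr_T4[OF assms] by (intro ext)
  have "sym2 ?t m n = (if i = j then 1 else 0) * (sym2 (chi k l) m n - sym2 (chi l k) m n)
     - (if i = k then 1 else 0) * sym2 (chi l j) m n + (if i = l then 1 else 0) * sym2 (chi k j) m n"
    unfolding t sym2_def by (simp add: algebra_simps)
  also have "\<dots> = - (if i = k then mono l j m n else 0) + (if i = l then mono k j m n else 0)"
    unfolding sym2_chi by (simp add: mono_sym[of k l])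
  finally show "trA g (T4 (La i) (Lb j) (Lb k) (Lb l)) m n = (if m \<in> {1..g} \<and> n \<in> {1..g} then
     - (if i = k then mono l j m n else 0) + (if i = l then mono k j m n else 0) else 0)"
    by (simp add: trA_def)
qed



definition tneg :: "tensor \<Rightarrow> tensor" where "tneg x = (\<lambda>w. - x w)"

lemma tmul_neg2: "tmul x (\<lambda>w. - y w) = (\<lambda>w. - tmul x y w)"
  by (simp add: tmul_def fun_eq_iff sum_negf)
lemma tmul_neg1: "tmul (\<lambda>w. - x w) y = (\<lambda>w. - tmul x y w)"
  by (simp add: tmul_def fun_eq_iff sum_negf)
lemma tmul_add2: "tmul x (\<lambda>w. y w + z w) = (\<lambda>w. tmul x y w + tmul x z w)"
  by (simp add: tmul_def fun_eq_iff sum.distrib distrib_left)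
lemma tmul_zero2: "tmul x (\<lambda>w. 0) = (\<lambda>w. 0)"
  by (simp add: tmul_def fun_eq_iff)
lemma tmul_zero1: "tmul (\<lambda>w. 0) x = (\<lambda>w. 0)"
  by (simp add: tmul_def fun_eq_iff)
lemma lie_swap: "lie y x = (\<lambda>w. - lie x y w)"
  by (simp add: lie_def tsub_def fun_eq_iff)
lemma lie_neg1: "lie (\<lambda>w. - x w) y = (\<lambda>w. - lie x y w)"
  by (simp add: lie_def tsub_def fun_eq_iff tmul_neg1 tmul_neg2)
lemma lie_neg2: "lie y (\<lambda>w. - x w) = (\<lambda>w. - lie y x w)"
  by (simp add: lie_def tsub_def fun_eq_iff tmul_neg1 tmul_neg2)
lemma lie_self: "lie x x = (\<lambda>w. 0)"
  by (simp add: lie_def tsub_def fun_eq_iff)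
lemma lie_zero1: "lie (\<lambda>w. 0) x = (\<lambda>w. 0)"
  by (simp add: lie_def tsub_def fun_eq_iff tmul_zero1 tmul_zero2)
lemma lie_zero2: "lie x (\<lambda>w. 0) = (\<lambda>w. 0)"
  by (simp add: lie_def tsub_def fun_eq_iff tmul_zero1 tmul_zero2)



lemma T4_antisym: "T4 a b d c = tneg (T4 a b c d)"
proof -
  have l1: "lie (gen d) (gen c) = (\<lambda>w. - lie (gen c) (gen d) w)" by (rule lie_swap)
  have l2: "lie (gen c) (lie (gen a) (gen b)) = (\<lambda>w. - lie (lie (gen a) (gen b)) (gen c) w)" by (rule lie_swap)
  have l3: "lie (lie (gen a) (gen b)) (gen d) = (\<lambda>w. - lie (gen d) (lie (gen a) (gen b)) w)" by (rule lie_swap)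
  show ?thesis
    unfolding T4_def tneg_def tadd_def l1 l2 l3 lie_neg1 lie_neg2 tmul_neg2
    by (simp add: fun_eq_iff)
qed

lemma T4_self: "T4 a b c c = (\<lambda>w. 0)"
proof -
  have l: "lie (gen c) (lie (gen a) (gen b)) = (\<lambda>w. - lie (lie (gen a) (gen b)) (gen c) w)" by (rule lie_swap)
  have "tmul (gen c) (lie (gen c) (lie (gen a) (gen b))) = (\<lambda>w. - tmul (gen c) (lie (lie (gen a) (gen b)) (gen c)) w)"
    unfolding l tmul_neg2 ..
  then show ?thesis
    unfolding T4_def tadd_def lie_self lie_zero1 lie_zero2 tmul_zero2
    by (simp add: fun_eq_iff)
qed




lemma contr_tadd: "contr g (tadd x y) m n = contr g x m n + contr g y m n"
  by (simp add: contr_simp tadd_def sum.distrib)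
lemma contr_tsub: "contr g (tsub x y) m n = contr g x m n - contr g y m n"
  by (simp add: contr_simp tsub_def sum_subtractf)
lemma trA_tadd: "trA g (tadd x y) = (\<lambda>m n. trA g x m n + trA g y m n)"
proof (intro ext)
  fix m n
  show "trA g (tadd x y) m n = trA g x m n + trA g y m n"
    unfolding trA_def sym2_def contr_tadd by (cases "m = n") simp_all
qed
lemma trA_tsub: "trA g (tsub x y) = (\<lambda>m n. trA g x m n - trA g y m n)"
  by (simp add: trA_def sym2_def contr_tsub fun_eq_iff)
lemma trA_zero: "trA g (\<lambda>w. 0) = (\<lambda>m n. 0)"
  by (simp add: trA_def sym2_def contr_simp fun_eq_iff)

lemma zspan_base: "x \<in> S \<Longrightarrow> x \<in> zspan S"
  using zspan.add[OF _ zspan.zero, of x S] by (simp add: tadd_def)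

lemma zspan_add2: "y \<in> zspan S \<Longrightarrow> x \<in> zspan S \<Longrightarrow> tadd x y \<in> zspan S"
proof (induction y rule: zspan.induct)
  case zero then show ?case by (simp add: tadd_def)
next
  case (add s y)
  have "tadd x (tadd y s) = tadd (tadd x y) s" by (simp add: tadd_def fun_eq_iff)
  moreover have "tadd (tadd x y) s \<in> zspan S" by (rule zspan.add[OF add(1)]) (use add in auto)
  ultimately show ?case by simp
next
  case (sub s y)
  have "tadd x (tsub y s) = tsub (tadd x y) s" by (simp add: tadd_def tsub_def fun_eq_iff)
  moreover have "tsub (tadd x y) s \<in> zspan S" by (rule zspan.sub[OF sub(1)]) (use sub in auto)
  ultimately show ?case by simp
qed

lemma zspan_sub2: "y \<in> zspan S \<Longrightarrow> x \<in> zspan S \<Longrightarrow> tsub x y \<in> zspan S"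
proof (induction y rule: zspan.induct)
  case zero then show ?case by (simp add: tsub_def)
next
  case (add s y)
  have "tsub x (tadd y s) = tsub (tsub x y) s" by (simp add: tadd_def tsub_def fun_eq_iff)
  moreover have "tsub (tsub x y) s \<in> zspan S" by (rule zspan.sub[OF add(1)]) (use add in auto)
  ultimately show ?case by simp
next
  case (sub s y)
  have "tsub x (tsub y s) = tadd (tsub x y) s" by (simp add: tadd_def tsub_def fun_eq_iff)
  moreover have "tadd (tsub x y) s \<in> zspan S" by (rule zspan.add[OF sub(1)]) (use sub in auto)
  ultimately show ?case by simp
qed

lemma zspan_neg: "x \<in> zspan S \<Longrightarrow> tneg x \<in> zspan S"
  using zspan_sub2[OF _ zspan.zero, of x S] by (simp add: tsub_def tneg_def)



definition i0 :: "nat \<Rightarrow> nat" where "i0 m = (if m = 1 then 2 else 1)"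

definition E :: "nat \<Rightarrow> nat \<Rightarrow> tensor" where
  "E m n = (if m = n then T4 (La (i0 m)) (Lb m) (Lb m) (Lb (i0 m))
            else T4 (La m) (Lb m) (Lb n) (Lb m))"

definition P :: "nat \<Rightarrow> tensor \<Rightarrow> tensor" where
  "P g x = (\<lambda>w. \<Sum>m\<in>{1..g}. \<Sum>n\<in>{m..g}. trA g x m n * E m n w)"

lemma mono_alt: "mono p q m n = (if (if m = n then p = m \<and> q = m else (p = m \<and> q = n) \<or> (p = n \<and> q = m)) then 1 else 0)"
  by (simp add: mono_def)
lemma mono_le: assumes "m \<le> n" shows "mono p q m n = (if m = min p q \<and> n = max p q then 1 else 0)"
proof (cases "p \<le> q")
  case True
  then have mm: "min p q = p" "max p q = q" by auto
  have c: "(if m = n then p = m \<and> q = m else (p = m \<and> q = n) \<or> (p = n \<and> q = m)) = (m = p \<and> n = q)"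
    using True assms by auto
  show ?thesis unfolding mono_alt c mm ..
next
  case False
  then have mm: "min p q = q" "max p q = p" by auto
  have c: "(if m = n then p = m \<and> q = m else (p = m \<and> q = n) \<or> (p = n \<and> q = m)) = (m = q \<and> n = p)"
    using False assms by auto
  show ?thesis unfolding mono_alt c mm ..
qed

lemma sum_mono_E:
  assumes "p \<in> {1..g}" "q \<in> {1..g}"
  shows "(\<Sum>m\<in>{1..g}. \<Sum>n\<in>{m..g}. mono p q m n * f m n) = (f (min p q) (max p q) :: int)"
proof -
  let ?a = "min p q" and ?b = "max p q"
  have ab: "?a \<in> {1..g}" "?b \<in> {?a..g}" using assms by auto
  have "(\<Sum>m\<in>{1..g}. \<Sum>n\<in>{m..g}. mono p q m n * f m n)
      = (\<Sum>m\<in>{1..g}. if m = ?a then f ?a ?b else 0)"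
  proof (rule sum.cong[OF refl])
    fix m assume m: "m \<in> {1..g}"
    have "(\<Sum>n\<in>{m..g}. mono p q m n * f m n) = (\<Sum>n\<in>{m..g}. if m = ?a then (if n = ?b then f ?a ?b else 0) else 0)"
      by (rule sum.cong[OF refl]) (simp add: mono_le)
    also have "\<dots> = (if m = ?a then f ?a ?b else 0)"
      using ab by (cases "m = ?a") (simp_all add: sum.delta')
    finally show "(\<Sum>n\<in>{m..g}. mono p q m n * f m n) = (if m = ?a then f ?a ?b else 0)" .
  qed
  also have "\<dots> = f ?a ?b" using ab by (simp add: sum.delta')
  finally show ?thesis .
qed

lemma P_T4:
  assumes "i \<in> {1..g}" "j \<in> {1..g}" "k \<in> {1..g}" "l \<in> {1..g}"
  shows "P g (T4 (La i) (Lb j) (Lb k) (Lb l)) =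
     (\<lambda>w. - (if i = k then E (min l j) (max l j) w else 0) + (if i = l then E (min k j) (max k j) w else 0))"
proof
  fix w
  have "P g (T4 (La i) (Lb j) (Lb k) (Lb l)) w =
     (\<Sum>m\<in>{1..g}. \<Sum>n\<in>{m..g}. (- (if i = k then 1 else 0)) * (mono l j m n * E m n w)
         + (if i = l then 1 else 0) * (mono k j m n * E m n w))"
    unfolding P_def trA_T4[OF assms(1)]
    by (intro sum.cong refl) (auto simp: algebra_simps)
  also have "\<dots> = - (if i = k then 1 else 0) * (\<Sum>m\<in>{1..g}. \<Sum>n\<in>{m..g}. mono l j m n * E m n w)
     + (if i = l then 1 else 0) * (\<Sum>m\<in>{1..g}. \<Sum>n\<in>{m..g}. mono k j m n * E m n w)"
    by (simp only: sum.distrib sum_distrib_left)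
  also have "\<dots> = - (if i = k then E (min l j) (max l j) w else 0) + (if i = l then E (min k j) (max k j) w else 0)"
    unfolding sum_mono_E[OF assms(4) assms(2)] sum_mono_E[OF assms(3) assms(2)] by simp
  finally show "P g (T4 (La i) (Lb j) (Lb k) (Lb l)) w = \<dots>" .
qed

lemma P_tadd: "P g (tadd x y) = tadd (P g x) (P g y)"
  unfolding P_def trA_tadd by (simp add: tadd_def fun_eq_iff sum.distrib distrib_right)
lemma P_tsub: "P g (tsub x y) = tsub (P g x) (P g y)"
  unfolding P_def trA_tsub by (simp add: tsub_def fun_eq_iff sum_subtractf left_diff_distrib)
lemma P_zero: "P g (\<lambda>w. 0) = (\<lambda>w. 0)"
  by (simp add: P_def trA_zero fun_eq_iff)
lemma P_trA0: "trA g x = (\<lambda>m n. 0) \<Longrightarrow> P g x = (\<lambda>w. 0)"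
  by (simp add: P_def fun_eq_iff)



definition Gset :: "nat \<Rightarrow> tensor set" where
  "Gset g = {T4 (La i) (Lb j) (Lb k) (Lb l) | i j k l.
         i \<in> {1..g} \<and> j \<in> {1..g} \<and> k \<in> {1..g} \<and> l \<in> {1..g} \<and>
         i \<noteq> j \<and> i \<noteq> k \<and> i \<noteq> l}
    \<union> {T4 (La i) (Lb i) (Lb k) (Lb l) | i k l.
         i \<in> {1..g} \<and> k \<in> {1..g} \<and> l \<in> {1..g} \<and> i \<noteq> k \<and> i \<noteq> l}
    \<union> {tsub (T4 (La i) (Lb j) (Lb j) (Lb i)) (T4 (La i') (Lb j) (Lb j) (Lb i')) | i i' j.
         i \<in> {1..g} \<and> i' \<in> {1..g} \<and> j \<in> {1..g} \<and> i \<noteq> j \<and> i' \<noteq> j}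
    \<union> {tsub (T4 (La i) (Lb j) (Lb k) (Lb i)) (T4 (La i') (Lb j) (Lb k) (Lb i')) | i i' j k.
         i \<in> {1..g} \<and> i' \<in> {1..g} \<and> j \<in> {1..g} \<and> k \<in> {1..g} \<and>
         i \<notin> {j, k} \<and> i' \<notin> {j, k} \<and> j \<noteq> k}
    \<union> {tsub (T4 (La i) (Lb j) (Lb k) (Lb i)) (T4 (La i') (Lb k) (Lb j) (Lb i')) | i i' j k.
         i \<in> {1..g} \<and> i' \<in> {1..g} \<and> j \<in> {1..g} \<and> k \<in> {1..g} \<and>
         i \<notin> {j, k} \<and> i' \<notin> {j, k} \<and> j \<noteq> k}
    \<union> {tsub (T4 (La i) (Lb j) (Lb k) (Lb i)) (T4 (La j) (Lb j) (Lb k) (Lb j)) | i j k.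
         i \<in> {1..g} \<and> j \<in> {1..g} \<and> k \<in> {1..g} \<and> i \<notin> {j, k} \<and> j \<noteq> k}
    \<union> {tsub (T4 (La i) (Lb j) (Lb k) (Lb i)) (T4 (La k) (Lb k) (Lb j) (Lb k)) | i j k.
         i \<in> {1..g} \<and> j \<in> {1..g} \<and> k \<in> {1..g} \<and> i \<notin> {j, k} \<and> j \<noteq> k}
    \<union> {tsub (T4 (La i) (Lb i) (Lb k) (Lb i)) (T4 (La k) (Lb k) (Lb i) (Lb k)) | i k.
         i \<in> {1..g} \<and> k \<in> {1..g} \<and> i \<noteq> k}"


lemma G1: "i \<in> {1..g} \<Longrightarrow> j \<in> {1..g} \<Longrightarrow> k \<in> {1..g} \<Longrightarrow> l \<in> {1..g} \<Longrightarrow>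
  i \<noteq> j \<Longrightarrow> i \<noteq> k \<Longrightarrow> i \<noteq> l \<Longrightarrow> T4 (La i) (Lb j) (Lb k) (Lb l) \<in> Gset g"
  unfolding Gset_def by (rule UnI1, rule UnI1, rule UnI1, rule UnI1, rule UnI1, rule UnI1, rule UnI1) blast
lemma G2: "i \<in> {1..g} \<Longrightarrow> k \<in> {1..g} \<Longrightarrow> l \<in> {1..g} \<Longrightarrow>
  i \<noteq> k \<Longrightarrow> i \<noteq> l \<Longrightarrow> T4 (La i) (Lb i) (Lb k) (Lb l) \<in> Gset g"
  unfolding Gset_def by (rule UnI1, rule UnI1, rule UnI1, rule UnI1, rule UnI1, rule UnI1, rule UnI2) blast
lemma G3: "i \<in> {1..g} \<Longrightarrow> i' \<in> {1..g} \<Longrightarrow> j \<in> {1..g} \<Longrightarrow> i \<noteq> j \<Longrightarrow> i' \<noteq> j \<Longrightarrow>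
  tsub (T4 (La i) (Lb j) (Lb j) (Lb i)) (T4 (La i') (Lb j) (Lb j) (Lb i')) \<in> Gset g"
  unfolding Gset_def by (rule UnI1, rule UnI1, rule UnI1, rule UnI1, rule UnI1, rule UnI2) blast
lemma G6: "i \<in> {1..g} \<Longrightarrow> j \<in> {1..g} \<Longrightarrow> k \<in> {1..g} \<Longrightarrow> i \<noteq> j \<Longrightarrow> i \<noteq> k \<Longrightarrow> j \<noteq> k \<Longrightarrow>
  tsub (T4 (La i) (Lb j) (Lb k) (Lb i)) (T4 (La j) (Lb j) (Lb k) (Lb j)) \<in> Gset g"
  unfolding Gset_def by (rule UnI1, rule UnI1, rule UnI2) blast
lemma G7: "i \<in> {1..g} \<Longrightarrow> j \<in> {1..g} \<Longrightarrow> k \<in> {1..g} \<Longrightarrow> i \<noteq> j \<Longrightarrow> i \<noteq> k \<Longrightarrow> j \<noteq> k \<Longrightarrow>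
  tsub (T4 (La i) (Lb j) (Lb k) (Lb i)) (T4 (La k) (Lb k) (Lb j) (Lb k)) \<in> Gset g"
  unfolding Gset_def by (rule UnI1, rule UnI2) blast
lemma G8: "i \<in> {1..g} \<Longrightarrow> k \<in> {1..g} \<Longrightarrow> i \<noteq> k \<Longrightarrow>
  tsub (T4 (La i) (Lb i) (Lb k) (Lb i)) (T4 (La k) (Lb k) (Lb i) (Lb k)) \<in> Gset g"
  unfolding Gset_def by (rule UnI2) blast


lemma i0_props: "g \<ge> 2 \<Longrightarrow> i0 m \<in> {1..g} \<and> i0 m \<noteq> m"
  by (auto simp: i0_def)

lemma key:
  assumes g: "g \<ge> 2" and ijkl: "i \<in> {1..g}" "j \<in> {1..g}" "k \<in> {1..g}" "l \<in> {1..g}"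
  shows "tsub (T4 (La i) (Lb j) (Lb k) (Lb l)) (P g (T4 (La i) (Lb j) (Lb k) (Lb l))) \<in> zspan (Gset g)"
    (is "tsub ?s (P g ?s) \<in> ?Z")
proof -
  note Pf = P_T4[OF ijkl]
  have inZ: "\<And>X. X \<in> Gset g \<Longrightarrow> X \<in> ?Z" by (rule zspan_base)
  have inZn: "\<And>X. X \<in> Gset g \<Longrightarrow> tneg X \<in> ?Z" by (rule zspan_neg[OF zspan_base])
  show ?thesis
  proof (cases "i = k")
    case ik: True
    show ?thesis
    proof (cases "i = l")
      case True
      then have "tsub ?s (P g ?s) = (\<lambda>w. 0)" using ik unfolding Pf
        by (simp add: T4_self tsub_def fun_eq_iff)
      then show ?thesis by (simp add: zspan.zero)
    next
      case il: False
      have s: "?s = tneg (T4 (La i) (Lb j) (Lb l) (Lb i))" using ik T4_antisym[of "La i" "Lb j" "Lb i" "Lb l"] by simp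
      show ?thesis
      proof (cases "j = i")
        case ji: True
        show ?thesis
        proof (cases "i < l")
          case True
          then have "tsub ?s (P g ?s) = (\<lambda>w. 0)" using ik il ji unfolding Pf unfolding s
            by (simp add: E_def tsub_def tneg_def fun_eq_iff min_def max_def)
          then show ?thesis by (simp add: zspan.zero)
        next
          case False
          then have "tsub ?s (P g ?s) = tsub (T4 (La l) (Lb l) (Lb i) (Lb l)) (T4 (La i) (Lb i) (Lb l) (Lb i))"
            using ik il ji unfolding Pf unfolding s
            by (simp add: E_def tsub_def tneg_def fun_eq_iff min_def max_def)
          moreover have "\<dots> \<in> Gset g" by (intro G8) (use ijkl il in auto)
          ultimately show ?thesis using inZ by simp
        qed
      next
        case ji: False
        show ?thesis
        proof (cases "l = j")
          case True
          then have "tsub ?s (P g ?s) = tsub (T4 (La (i0 j)) (Lb j) (Lb j) (Lb (i0 j))) (T4 (La i) (Lb j) (Lb j) (Lb i))"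
            using ik il ji unfolding Pf unfolding s
            by (simp add: E_def tsub_def tneg_def fun_eq_iff)
          moreover have "\<dots> \<in> Gset g" by (intro G3) (use ijkl ji i0_props[OF g, of j] True in auto)
          ultimately show ?thesis using inZ by simp
        next
          case lj: False
          show ?thesis
          proof (cases "j < l")
            case True
            then have "tsub ?s (P g ?s) = tneg (tsub (T4 (La i) (Lb j) (Lb l) (Lb i)) (T4 (La j) (Lb j) (Lb l) (Lb j)))"
              using ik il ji lj unfolding Pf unfolding s
              by (simp add: E_def tsub_def tneg_def fun_eq_iff min_def max_def)
            moreover have "tsub (T4 (La i) (Lb j) (Lb l) (Lb i)) (T4 (La j) (Lb j) (Lb l) (Lb j)) \<in> Gset g"
              by (intro G6 G7) (use ijkl ji lj il ik in auto)
            ultimately show ?thesis using inZn by simp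
          next
            case False
            then have "tsub ?s (P g ?s) = tneg (tsub (T4 (La i) (Lb j) (Lb l) (Lb i)) (T4 (La l) (Lb l) (Lb j) (Lb l)))"
              using ik il ji lj unfolding Pf unfolding s
              by (simp add: E_def tsub_def tneg_def fun_eq_iff min_def max_def)
            moreover have "tsub (T4 (La i) (Lb j) (Lb l) (Lb i)) (T4 (La l) (Lb l) (Lb j) (Lb l)) \<in> Gset g"
              by (intro G6 G7) (use ijkl ji lj il ik in auto)
            ultimately show ?thesis using inZn by simp
          qed
        qed
      qed
    qed
  next
    case ik: False
    show ?thesis
    proof (cases "i = l")
      case il: False
      then have "tsub ?s (P g ?s) = ?s" using ik unfolding Pf by (simp add: tsub_def fun_eq_iff)
      moreover have "?s \<in> Gset g"
      proof (cases "i = j")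
        case True then show ?thesis using ijkl ik il G2[of i g k l] by simp
      next
        case False then show ?thesis by (intro G1) (use ijkl ik il in auto)
      qed
      ultimately show ?thesis using inZ by simp
    next
      case il: True
      show ?thesis
      proof (cases "j = i")
        case ji: True
        show ?thesis
        proof (cases "i < k")
          case True
          then have "tsub ?s (P g ?s) = (\<lambda>w. 0)" using ik il ji unfolding Pf
            by (simp add: E_def tsub_def fun_eq_iff min_def max_def)
          then show ?thesis by (simp add: zspan.zero)
        next
          case False
          then have "tsub ?s (P g ?s) = tsub (T4 (La i) (Lb i) (Lb k) (Lb i)) (T4 (La k) (Lb k) (Lb i) (Lb k))"
            using ik il ji unfolding Pf
            by (simp add: E_def tsub_def fun_eq_iff min_def max_def)
          moreover have "\<dots> \<in> Gset g" by (intro G8) (use ijkl ik in auto)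
          ultimately show ?thesis using inZ by simp
        qed
      next
        case ji: False
        show ?thesis
        proof (cases "k = j")
          case True
          then have "tsub ?s (P g ?s) = tsub (T4 (La i) (Lb j) (Lb j) (Lb i)) (T4 (La (i0 j)) (Lb j) (Lb j) (Lb (i0 j)))"
            using ik il ji unfolding Pf
            by (simp add: E_def tsub_def fun_eq_iff)
          moreover have "\<dots> \<in> Gset g" by (intro G3) (use ijkl ji i0_props[OF g, of j] True in auto)
          ultimately show ?thesis using inZ by simp
        next
          case kj: False
          show ?thesis
          proof (cases "j < k")
            case True
            then have "tsub ?s (P g ?s) = tsub (T4 (La i) (Lb j) (Lb k) (Lb i)) (T4 (La j) (Lb j) (Lb k) (Lb j))"
              using ik il ji kj unfolding Pf
              by (simp add: E_def tsub_def fun_eq_iff min_def max_def)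
            moreover have "\<dots> \<in> Gset g"
              by (intro G6 G7) (use ijkl ji kj il ik in auto)
            ultimately show ?thesis using inZ by simp
          next
            case False
            then have "tsub ?s (P g ?s) = tsub (T4 (La i) (Lb j) (Lb k) (Lb i)) (T4 (La k) (Lb k) (Lb j) (Lb k))"
              using ik il ji kj unfolding Pf
              by (simp add: E_def tsub_def fun_eq_iff min_def max_def)
            moreover have "\<dots> \<in> Gset g"
              by (intro G6 G7) (use ijkl ji kj il ik in auto)
            ultimately show ?thesis using inZ by simp
          qed
        qed
      qed
    qed
  qed
qed



lemma Gset_tr: "x \<in> Gset g \<Longrightarrow> trA g x = (\<lambda>m n. 0)"
  unfolding Gset_def
  by (elim UnE CollectE exE conjE; simp only: trA_tsub trA_T4; simp add: fun_eq_iff mono_sym)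

lemma Sgen: "i \<in> {1..g} \<Longrightarrow> j \<in> {1..g} \<Longrightarrow> k \<in> {1..g} \<Longrightarrow> l \<in> {1..g} \<Longrightarrow>
   T4 (La i) (Lb j) (Lb k) (Lb l) \<in> W g"
  unfolding W_def by (rule zspan_base) blast

lemma Wsub: "x \<in> W g \<Longrightarrow> y \<in> W g \<Longrightarrow> tsub x y \<in> W g"
  unfolding W_def by (rule zspan_sub2)

lemma Gset_W: "x \<in> Gset g \<Longrightarrow> x \<in> W g"
  unfolding Gset_def
  by (elim UnE CollectE exE conjE; simp only: ; intro Wsub Sgen; simp)



lemma W_P: "x \<in> W g \<Longrightarrow> g \<ge> 2 \<Longrightarrow> tsub x (P g x) \<in> zspan (Gset g)"
  unfolding W_def
proof (induction x rule: zspan.induct)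
  case zero then show ?case by (simp add: P_zero tsub_def zspan.zero)
next
  case (add s y)
  have "tsub (tadd y s) (P g (tadd y s)) = tadd (tsub y (P g y)) (tsub s (P g s))"
    unfolding P_tadd by (simp add: tadd_def tsub_def fun_eq_iff)
  moreover have "tsub s (P g s) \<in> zspan (Gset g)" using add(1) key[OF add(4)] by blast
  moreover have "tsub y (P g y) \<in> zspan (Gset g)" using add(3,4) by blast
  ultimately show ?case using zspan_add2 by simp
next
  case (sub s y)
  have "tsub (tsub y s) (P g (tsub y s)) = tsub (tsub y (P g y)) (tsub s (P g s))"
    unfolding P_tsub by (simp add: tsub_def fun_eq_iff)
  moreover have "tsub s (P g s) \<in> zspan (Gset g)" using sub(1) key[OF sub(4)] by blast
  moreover have "tsub y (P g y) \<in> zspan (Gset g)" using sub(3,4) by blast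
  ultimately show ?case using zspan_sub2 by simp
qed

lemma Gspan: "x \<in> zspan (Gset g) \<Longrightarrow> x \<in> W g \<and> trA g x = (\<lambda>_ _. 0)"
proof (induction x rule: zspan.induct)
  case zero then show ?case by (simp add: W_def zspan.zero trA_zero)
next
  case (add s y) then show ?case
    using Gset_W Gset_tr zspan_add2[of s "_" y] by (auto simp: trA_tadd W_def)
next
  case (sub s y) then show ?case
    using Gset_W Gset_tr zspan_sub2[of s "_" y] by (auto simp: trA_tsub W_def)
qed

theorem proposition5p4:
  fixes g :: nat
  assumes "g \<ge> 2"
  shows "{x \<in> W g. trA g x = (\<lambda>_ _. 0)} =
    zspan (
      {T4 (La i) (Lb j) (Lb k) (Lb l) | i j k l.
         i \<in> {1..g} \<and> j \<in> {1..g} \<and> k \<in> {1..g} \<and> l \<in> {1..g} \<and>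
         i \<noteq> j \<and> i \<noteq> k \<and> i \<noteq> l}
    \<union> {T4 (La i) (Lb i) (Lb k) (Lb l) | i k l.
         i \<in> {1..g} \<and> k \<in> {1..g} \<and> l \<in> {1..g} \<and> i \<noteq> k \<and> i \<noteq> l}
    \<union> {tsub (T4 (La i) (Lb j) (Lb j) (Lb i)) (T4 (La i') (Lb j) (Lb j) (Lb i')) | i i' j.
         i \<in> {1..g} \<and> i' \<in> {1..g} \<and> j \<in> {1..g} \<and> i \<noteq> j \<and> i' \<noteq> j}
    \<union> {tsub (T4 (La i) (Lb j) (Lb k) (Lb i)) (T4 (La i') (Lb j) (Lb k) (Lb i')) | i i' j k.
         i \<in> {1..g} \<and> i' \<in> {1..g} \<and> j \<in> {1..g} \<and> k \<in> {1..g} \<and>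
         i \<notin> {j, k} \<and> i' \<notin> {j, k} \<and> j \<noteq> k}
    \<union> {tsub (T4 (La i) (Lb j) (Lb k) (Lb i)) (T4 (La i') (Lb k) (Lb j) (Lb i')) | i i' j k.
         i \<in> {1..g} \<and> i' \<in> {1..g} \<and> j \<in> {1..g} \<and> k \<in> {1..g} \<and>
         i \<notin> {j, k} \<and> i' \<notin> {j, k} \<and> j \<noteq> k}
    \<union> {tsub (T4 (La i) (Lb j) (Lb k) (Lb i)) (T4 (La j) (Lb j) (Lb k) (Lb j)) | i j k.
         i \<in> {1..g} \<and> j \<in> {1..g} \<and> k \<in> {1..g} \<and> i \<notin> {j, k} \<and> j \<noteq> k}
    \<union> {tsub (T4 (La i) (Lb j) (Lb k) (Lb i)) (T4 (La k) (Lb k) (Lb j) (Lb k)) | i j k.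
         i \<in> {1..g} \<and> j \<in> {1..g} \<and> k \<in> {1..g} \<and> i \<notin> {j, k} \<and> j \<noteq> k}
    \<union> {tsub (T4 (La i) (Lb i) (Lb k) (Lb i)) (T4 (La k) (Lb k) (Lb i) (Lb k)) | i k.
         i \<in> {1..g} \<and> k \<in> {1..g} \<and> i \<noteq> k})"
proof -
  have "{x \<in> W g. trA g x = (\<lambda>_ _. 0)} = zspan (Gset g)"
  proof
    show "{x \<in> W g. trA g x = (\<lambda>_ _. 0)} \<subseteq> zspan (Gset g)"
    proof
      fix x assume "x \<in> {x \<in> W g. trA g x = (\<lambda>_ _. 0)}"
      then have x: "x \<in> W g" "trA g x = (\<lambda>_ _. 0)" by auto
      have "tsub x (P g x) = x" using P_trA0[OF x(2)] by (simp add: tsub_def)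
      then show "x \<in> zspan (Gset g)" using W_P[OF x(1) assms] by simp
    qed
  next
    show "zspan (Gset g) \<subseteq> {x \<in> W g. trA g x = (\<lambda>_ _. 0)}" using Gspan by blast
  qed
  then show ?thesis unfolding Gset_def .
qed


end
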